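(* Let $h>0$, $0\le\alpha<1/4$, $g=(0,0)$, $t=\dfrac{2h}{\tan(\pi/4-\alpha)}$, $s_p=(-t/2,h)$ and $s_q=(t/2,h)$. Then the worst-case uncertainty of this pair satisfies $$\varepsilon(g,\{s_p,s_q\})\;\le\;\sqrt{\frac{1+2\alpha}{1-4\alpha}}\cdot\frac{2h\sin(2\alpha)}{1-\sin(2\alpha)}.$$
   Context: Work in $\mathbb{R}^2$ with coordinates $(x,z)$. The ground line is $G=\{z=0\}$ and the viewing line is $S=\{z=h\}$, $h>0$. Fix $\alpha>0$. For a point $s$ and a unit vector $u$, the wedge $W(s,u)=\{s+rv:\ r\ge 0,\ |v|=1,\ \angle(v,u)\le\alpha\}$ (apex $s$, opening angle $2\alpha$). For a target $g$ and camera location $s$, $\mathcal W(g,s)$ is the set of all wedges $W(s,u)$ containing $g$. For $C\subseteq S$, $\varepsilon(g,C)=\sup\{\operatorname{diam}(\bigcap_{s\in C}W_s): W_s\in\mathcal W(g,s)\ \forall s\in C\}$. *)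

theory Defs
  imports "HOL-Analysis.Analysis"
begin

type_synonym pt = "real \<times> real"

definition ang :: "pt \<Rightarrow> pt \<Rightarrow> real" where
  "ang v u = arccos (v \<bullet> u)"

definition wedge :: "real \<Rightarrow> pt \<Rightarrow> pt \<Rightarrow> pt set" where
  "wedge \<alpha> s u = {s + r *\<^sub>R v | r v. r \<ge> 0 \<and> norm v = 1 \<and> ang v u \<le> \<alpha>}"

definition wedges :: "real \<Rightarrow> pt \<Rightarrow> pt \<Rightarrow> pt set set" where
  "wedges \<alpha> g s = {wedge \<alpha> s u | u. norm u = 1 \<and> g \<in> wedge \<alpha> s u}"

definition ediam :: "pt set \<Rightarrow> ereal" where
  "ediam S = (if S = {} then 0 else Sup {ereal (dist x y) | x y. x \<in> S \<and> y \<in> S})"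

definition eps :: "real \<Rightarrow> pt \<Rightarrow> pt set \<Rightarrow> ereal" where
  "eps \<alpha> g C = Sup {ediam (\<Inter>s\<in>C. W s) | W. \<forall>s\<in>C. W s \<in> wedges \<alpha> g s}"

end

theory Submission
  imports Defs
begin

lemma norm_pt: "norm ((a,b)::pt) = sqrt (a^2+b^2)"
  by (simp add: norm_prod_def)

lemma wedge_comp:
  assumes "x \<in> wedge \<alpha> s u" "u = (u1,u2)" "u1^2+u2^2 = 1" "0 \<le> \<alpha>" "\<alpha> \<le> pi"
  shows "\<exists>r v1 v2. r \<ge> 0 \<and> v1^2+v2^2 = 1 \<and> v1 * u1+v2 * u2 \<ge> cos \<alpha> \<and> x = s + (r * v1, r * v2)"
proof -
  obtain r v where r: "r \<ge> 0" "norm v = 1" "ang v u \<le> \<alpha>" "x = s + r *\<^sub>R v"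
    using assms(1) unfolding wedge_def by blast
  obtain v1 v2 where v: "v = (v1,v2)" by (cases v)
  have n1: "v1^2+v2^2 = 1" using r(2) v by (simp add: norm_pt)
  define p where "p = v1 * u1+v2 * u2"
  have id: "p^2 + (v1 * u2 - v2 * u1)^2 = (v1^2+v2^2) * (u1^2+u2^2)" unfolding p_def
    by (simp add: algebra_simps power2_eq_square)
  have id2: "p^2 + (v1 * u2 - v2 * u1)^2 = 1" using id n1 assms(3) by simp
  have "0 \<le> (v1 * u2 - v2 * u1)^2" by simp
  hence "p^2 \<le> 1" using id2 by linarith
  hence "\<bar>p\<bar> \<le> 1" by (simp add: abs_square_le_1)
  hence pb: "-1 \<le> p" "p \<le> 1" by auto
  have a: "arccos p \<le> \<alpha>" using r(3) v assms(2) by (simp add: ang_def p_def)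
  have "cos \<alpha> \<le> cos (arccos p)"
    using cos_mono_le_eq[of \<alpha> "arccos p"] a assms(4,5) arccos_lbound[OF pb] arccos_ubound[OF pb] by simp
  hence "cos \<alpha> \<le> p" using pb by simp
  thus ?thesis using r(1,4) n1 v unfolding p_def by (intro exI[of _ r] exI[of _ v1] exI[of _ v2]) auto
qed


lemma dot_lb:
  fixes v1 v2 w1 w2 u1 u2 c :: real
  assumes "v1^2+v2^2=1" "w1^2+w2^2=1" "u1^2+u2^2=1" "v1 * u1+v2 * u2 \<ge> c" "w1 * u1+w2 * u2 \<ge> c" "c \<ge> 0"
  shows "v1 * w1+v2 * w2 \<ge> 2 * c^2-1"
proof -
  define p q X Y where "p = v1 * u1+v2 * u2" "q = w1 * u1+w2 * u2" "X = v1 * u2 - v2 * u1" "Y = w1 * u2 - w2 * u1"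
  have "p * q + X * Y = (v1 * w1+v2 * w2) * (u1^2+u2^2)" unfolding p_q_X_Y_def by (simp add: algebra_simps power2_eq_square)
  hence i1: "v1 * w1+v2 * w2 = p * q + X * Y" using assms(3) by simp
  have "p^2 + X^2 = (v1^2+v2^2) * (u1^2+u2^2)" unfolding p_q_X_Y_def by (simp add: algebra_simps power2_eq_square)
  hence i2: "p^2 + X^2 = 1" using assms by simp
  have "q^2 + Y^2 = (w1^2+w2^2) * (u1^2+u2^2)" unfolding p_q_X_Y_def by (simp add: algebra_simps power2_eq_square)
  hence i3: "q^2 + Y^2 = 1" using assms by simp
  have i4: "(X+Y)^2 = X^2 + 2 * (X * Y) + Y^2" by (simp add: algebra_simps power2_eq_square)
  have i5: "(p+q)^2 = p^2 + 2 * (p * q) + q^2" by (simp add: algebra_simps power2_eq_square)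
  have "(2 * c)^2 \<le> (p+q)^2" using assms(4-6) unfolding p_q_X_Y_def by (intro power_mono) auto
  hence i6: "4 * c^2 \<le> (p+q)^2" by (simp add: power_mult_distrib)
  have "0 \<le> (X+Y)^2" by simp
  thus ?thesis using i1 i2 i3 i4 i5 i6 by linarith
qed

lemma chord:
  fixes v1 v2 w1 w2 n1 n2 c s k :: real
  assumes "v1^2+v2^2=1" "w1^2+w2^2=1" "v1 * w1+v2 * w2 \<ge> 2 * c^2-1" "c^2+s^2=1" "s \<ge> 0"
    "n1^2+n2^2 = k^2" "k \<ge> 0"
  shows "\<bar>(v1-w1) * n1 + (v2-w2) * n2\<bar> \<le> 2 * s * k"
proof -
  have "((v1-w1) * n1 + (v2-w2) * n2)^2 + ((v1-w1) * n2 - (v2-w2) * n1)^2 = ((v1-w1)^2+(v2-w2)^2) * (n1^2+n2^2)"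
    by (simp add: algebra_simps power2_eq_square)
  moreover have "(v1-w1)^2+(v2-w2)^2 = (v1^2+v2^2) + (w1^2+w2^2) - 2 * (v1 * w1+v2 * w2)"
    by (simp add: algebra_simps power2_eq_square)
  ultimately have e: "((v1-w1) * n1 + (v2-w2) * n2)^2 + ((v1-w1) * n2 - (v2-w2) * n1)^2 = (2 - 2 * (v1 * w1+v2 * w2)) * k^2"
    using assms by simp
  have "(2 - 2 * (v1 * w1+v2 * w2)) * k^2 \<le> (4 * s^2) * k^2"
    using assms by (intro mult_right_mono) auto
  moreover have "0 \<le> ((v1-w1) * n2 - (v2-w2) * n1)^2" by simp
  ultimately have "((v1-w1) * n1 + (v2-w2) * n2)^2 \<le> (4 * s^2) * k^2" using e by linarith
  moreover have "(2 * s * k)^2 = (4 * s^2) * k^2" by (simp add: power_mult_distrib)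
  ultimately have "((v1-w1) * n1 + (v2-w2) * n2)^2 \<le> (2 * s * k)^2" by simp
  hence "\<bar>(v1-w1) * n1 + (v2-w2) * n2\<bar> \<le> \<bar>2 * s * k\<bar>" using abs_le_square_iff by blast
  thus ?thesis using assms by simp
qed

lemma lat:
  fixes a b k R rx ry :: real
  assumes "\<bar>a-b\<bar> \<le> k" "\<bar>a\<bar> \<le> k" "\<bar>b\<bar> \<le> k" "0 \<le> rx" "rx \<le> R" "0 \<le> ry" "ry \<le> R"
  shows "\<bar>rx * a - ry * b\<bar> \<le> R * k"
proof (cases "a \<ge> 0")
  case True
  note a = this
  show ?thesis
  proof (cases "b \<ge> 0")
    case True
    have "rx * a \<le> R * a" "ry * b \<le> R * b" "0 \<le> rx * a" "0 \<le> ry * b" "R * a \<le> R * k" "R * b \<le> R * k"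
      using a True assms by (auto intro: mult_right_mono mult_left_mono)
    thus ?thesis by linarith
  next
    case False
    have "rx * a \<le> R * a" "R * b \<le> ry * b" "0 \<le> rx * a" "ry * b \<le> 0" "R * (a - b) \<le> R * k"
      using a False assms by (auto intro: mult_right_mono mult_left_mono mult_right_mono_neg mult_nonneg_nonpos)
    thus ?thesis using right_diff_distrib[of R a b] by linarith
  qed
next
  case False
  note a = this
  show ?thesis
  proof (cases "b \<ge> 0")
    case True
    have "R * a \<le> rx * a" "ry * b \<le> R * b" "rx * a \<le> 0" "0 \<le> ry * b" "R * (b - a) \<le> R * k"
      using a True assms by (auto intro: mult_right_mono mult_left_mono mult_right_mono_neg mult_nonneg_nonpos)
    thus ?thesis using right_diff_distrib[of R b a] by linarith
  next
    case False
    have f: "R * a \<le> rx * a" "R * b \<le> ry * b" "rx * a \<le> 0" "ry * b \<le> 0"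
      using a False assms by (auto intro: mult_right_mono_neg mult_nonneg_nonpos)
    have R0: "0 \<le> R" using assms by linarith
    have "- a \<le> k" "- b \<le> k" using assms by auto
    hence "R * (- a) \<le> R * k" "R * (- b) \<le> R * k" using mult_left_mono R0 by blast+
    thus ?thesis using f by linarith
  qed
qed

lemma rbound:
  fixes c s m K x1 x2 r v1 v2 r' w1 w2 :: real
  assumes cs: "c^2+s^2=1" "0 \<le> s" "s < c" and m: "m > 0" and K: "K^2 = 2" "K > 0"
    and w: "w1^2+w2^2 = 1" "r \<ge> 0" "r' \<ge> 0"
    and px: "x1 = - (m * (c+s)) + r * v1" "x2 = m * (c-s) + r * v2"
    and pv: "v1 * (c+s) + v2 * (s-c) \<ge> K * (c^2-s^2)"
    and qx: "x1 = m * (c+s) + r' * w1" "x2 = m * (c-s) + r' * w2"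
    and qw: "- (w1 * (c+s)) + w2 * (s-c) \<ge> K * (c^2-s^2)"
  shows "r * (K * (c^2-s^2)) \<le> 2 * m * (1 + 2 * s * c)"
proof -
  define C S where "C = c^2-s^2" "S = 2 * s * c"
  define eq nq where "eq = - (w1 * (c+s)) + w2 * (s-c)" "nq = w1 * (c-s) - w2 * (c+s)"
  have C0: "C > 0" unfolding C_S_def using cs
    by (smt (verit) mult_strict_mono power2_eq_square)
  have CS: "C^2 + S^2 = 1"
  proof -
    have "C^2 + S^2 = (c^2+s^2)^2" unfolding C_S_def by (simp add: algebra_simps power2_eq_square)
    thus ?thesis using cs by simp
  qed
  have "eq^2 + nq^2 = (w1^2+w2^2) * (2 * (c^2+s^2))" unfolding eq_nq_def by (simp add: algebra_simps power2_eq_square)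
  hence e1: "eq^2 + nq^2 = 2" using w cs by simp
  have "(K * C)^2 \<le> eq^2" using qw C0 K unfolding eq_nq_def C_S_def
    by (intro power_mono) auto
  hence "2 * C^2 \<le> eq^2" using K by (simp add: power_mult_distrib)
  hence "nq^2 \<le> (K * S)^2" using e1 CS K by (simp add: power_mult_distrib) 
  hence "\<bar>nq\<bar> \<le> \<bar>K * S\<bar>" using abs_le_square_iff by blast
  moreover have S0: "S \<ge> 0" unfolding C_S_def using cs by simp
  moreover have "\<bar>K * S\<bar> = K * S" using S0 K by simp
  ultimately have nqb: "nq \<le> K * S" by linarith
  have xnq: "x1 * (c-s) - x2 * (c+s) = r' * nq" unfolding eq_nq_def qx by (simp add: algebra_simps)
  have "x1 * (-(c+s)) + x2 * (s-c) + m * (2 * (c^2+s^2)) = r' * eq" unfolding eq_nq_def qx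
    by (simp add: algebra_simps power2_eq_square)
  hence xeq: "x1 * (-(c+s)) + x2 * (s-c) + 2 * m = r' * eq" using cs by simp
  have "C * (r' * nq) \<le> C * (r' * (K * S))" using C0 w nqb by (intro mult_left_mono) auto
  moreover have "S * (r' * (K * C)) \<le> S * (r' * eq)" using S0 w qw unfolding eq_nq_def C_S_def
    by (intro mult_left_mono) auto
  moreover have "C * (r' * (K * S)) = S * (r' * (K * C))" by simp
  ultimately have "C * (x1 * (c-s) - x2 * (c+s)) \<le> S * (x1 * (-(c+s)) + x2 * (s-c) + 2 * m)"
    using xnq xeq by simp
  moreover have "C * (x1 * (c-s) - x2 * (c+s)) - S * (x1 * (-(c+s)) + x2 * (s-c)) = (c^2+s^2) * (x1 * (c+s) + x2 * (s-c))"
    unfolding C_S_def by (simp add: algebra_simps power2_eq_square)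
  ultimately have B: "x1 * (c+s) + x2 * (s-c) \<le> 2 * m * S" using cs by (simp add: algebra_simps)
  have "x1 * (c+s) + x2 * (s-c) + m * (2 * (c^2+s^2)) = r * (v1 * (c+s) + v2 * (s-c))" unfolding px
    by (simp add: algebra_simps power2_eq_square)
  hence xep: "x1 * (c+s) + x2 * (s-c) + 2 * m = r * (v1 * (c+s) + v2 * (s-c))" using cs by simp
  have "r * (K * C) \<le> r * (v1 * (c+s) + v2 * (s-c))" using pv w unfolding C_S_def by (intro mult_left_mono) auto
  thus ?thesis using B xep unfolding C_S_def by (simp add: algebra_simps)
qed

lemma trig_facts:
  fixes \<alpha> :: real
  assumes "0 \<le> \<alpha>" "\<alpha> < 1/4"
  shows "cos \<alpha>^2 + sin \<alpha>^2 = 1" "0 \<le> sin \<alpha>" "sin \<alpha> < cos \<alpha>" "sin \<alpha> \<le> \<alpha>"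
    "sin (2 * \<alpha>) = 2 * sin \<alpha> * cos \<alpha>" "sin (2 * \<alpha>) \<le> 2 * \<alpha>"
    "tan (pi/4 - \<alpha>) = (cos \<alpha> - sin \<alpha>) / (cos \<alpha> + sin \<alpha>)"
proof -
  have pi2: "2 \<le> pi" by (rule pi_ge_two)
  show c1: "cos \<alpha>^2 + sin \<alpha>^2 = 1" by simp
  show s0: "0 \<le> sin \<alpha>" using assms pi2 by (intro sin_ge_zero) auto
  show sa: "sin \<alpha> \<le> \<alpha>" using assms by (intro sin_x_le_x) auto
  have c0: "0 < cos \<alpha>" using assms pi2 by (intro cos_gt_zero_pi) auto
  have "sin \<alpha>^2 \<le> (1/4)^2" using s0 sa assms by (intro power_mono) auto
  moreover have "(1/4::real)^2 = 1/16" by (simp add: power2_eq_square)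
  ultimately have "sin \<alpha>^2 < cos \<alpha>^2" using c1 by linarith
  thus "sin \<alpha> < cos \<alpha>" using c0 s0 by (smt (verit) power_mono)
  show "sin (2 * \<alpha>) = 2 * sin \<alpha> * cos \<alpha>" by (rule sin_double)
  show "sin (2 * \<alpha>) \<le> 2 * \<alpha>" using assms by (intro sin_x_le_x) auto
  have "tan (pi/4 - \<alpha>) = sin (pi/4 - \<alpha>) / cos (pi/4 - \<alpha>)" by (simp add: tan_def)
  also have "\<dots> = (sqrt 2 / 2 * cos \<alpha> - sqrt 2 / 2 * sin \<alpha>) / (sqrt 2 / 2 * cos \<alpha> + sqrt 2 / 2 * sin \<alpha>)"
    unfolding sin_diff cos_diff sin_45 cos_45 by (rule refl)
  also have "\<dots> = (sqrt 2 / 2 * (cos \<alpha> - sin \<alpha>)) / (sqrt 2 / 2 * (cos \<alpha> + sin \<alpha>))"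
    by (simp only: right_diff_distrib distrib_left)
  also have "\<dots> = (cos \<alpha> - sin \<alpha>) / (cos \<alpha> + sin \<alpha>)"
    by (rule mult_divide_mult_cancel_left) simp
  finally show "tan (pi/4 - \<alpha>) = (cos \<alpha> - sin \<alpha>) / (cos \<alpha> + sin \<alpha>)" .
qed

lemma gen1: "(u::real) \<noteq> 0 \<Longrightarrow> D \<noteq> 0 \<Longrightarrow> a * u^2 / (u * D) = (a / D) * u"
  by (simp add: field_simps power2_eq_square)

lemma gen2: "(w::real) \<noteq> 0 \<Longrightarrow> (4 * s * m / w^2) * (c * Q * w) = Q * (2 * (m * w) * (2 * s * c) / w^2)"
  by (simp add: field_simps power2_eq_square)

lemma final_ineq:
  fixes \<alpha> c s m :: real
  assumes a: "0 \<le> \<alpha>" "\<alpha> < 1/4" and cs: "c^2+s^2=1" "0 \<le> s" "s < c" "s \<le> \<alpha>" "2 * s * c \<le> 2 * \<alpha>"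
    and m: "m > 0"
  shows "4 * s * m * (1 + 2 * s * c) / ((c^2-s^2) * (c-s))
     \<le> sqrt ((1 + 2*\<alpha>) / (1 - 4*\<alpha>)) * (2 * (m * (c-s)) * (2 * s * c) / (1 - 2 * s * c))"
proof -
  define P where "P = 2 * s * c"
  have c0: "c > 0" using cs by linarith
  have P0: "P \<ge> 0" unfolding P_def using cs c0 by simp
  have P1: "1 - P = (c-s)^2" unfolding P_def using cs by (simp add: algebra_simps power2_eq_square)
  have P2: "1 + P = (c+s)^2" unfolding P_def using cs by (simp add: algebra_simps power2_eq_square)
  have cmp: "c-s > 0" using cs by simp
  have hP: "1 - P > 0" using P1 cmp by simp
  have c2: "c^2 \<ge> 1 - \<alpha>^2"
  proof -
    have "s^2 \<le> \<alpha>^2" using cs by (intro power_mono) auto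
    thus ?thesis using cs by linarith
  qed
  have key: "(1-\<alpha>^2) * (1+2*\<alpha>) * (1-P) - (1+P) * (1-4*\<alpha>)
      = (2*\<alpha> - P) * ((1-\<alpha>^2) * (1+2*\<alpha>) + (1-4*\<alpha>)) + (1+2*\<alpha>) * \<alpha> * (2 - \<alpha> + 2*\<alpha>^2)"
    by (simp add: algebra_simps power2_eq_square power3_eq_cube)
  have t1: "0 \<le> (2*\<alpha> - P) * ((1-\<alpha>^2) * (1+2*\<alpha>) + (1-4*\<alpha>))"
  proof (rule mult_nonneg_nonneg)
    show "0 \<le> 2*\<alpha> - P" using cs unfolding P_def by simp
    have "\<alpha>^2 \<le> (1/4)^2" using a by (intro power_mono) auto
    hence "0 \<le> 1 - \<alpha>^2" by (simp add: power2_eq_square)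
    moreover have "0 \<le> 1 + 2*\<alpha>" using a by simp
    ultimately have "0 \<le> (1-\<alpha>^2) * (1+2*\<alpha>)" by (rule mult_nonneg_nonneg)
    thus "0 \<le> (1-\<alpha>^2) * (1+2*\<alpha>) + (1-4*\<alpha>)" using a by linarith
  qed
  have t2: "0 \<le> (1+2*\<alpha>) * \<alpha> * (2 - \<alpha> + 2*\<alpha>^2)"
  proof (intro mult_nonneg_nonneg)
    show "0 \<le> 1 + 2*\<alpha>" "0 \<le> \<alpha>" using a by auto
    have "0 \<le> \<alpha>^2" by simp
    thus "0 \<le> 2 - \<alpha> + 2*\<alpha>^2" using a by linarith
  qed
  have "(1+P) * (1-4*\<alpha>) \<le> (1-\<alpha>^2) * (1+2*\<alpha>) * (1-P)" using key t1 t2 by linarith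
  also have "\<dots> \<le> c^2 * (1+2*\<alpha>) * (1-P)" using c2 a hP by (intro mult_right_mono) auto
  finally have ineq: "(1+P) * (1-4*\<alpha>) \<le> c^2 * (1+2*\<alpha>) * (1-P)" .
  have d4: "1 - 4*\<alpha> > 0" using a by simp
  have f1: "(1+P) / (1-P) \<le> c^2 * ((1+2*\<alpha>) / (1-4*\<alpha>))"
    using ineq d4 hP by (simp add: field_simps)
  have f2: "((c+s)/(c-s))^2 = (1+P)/(1-P)" using P1 P2 by (simp add: power_divide)
  define X where "X = (1+2*\<alpha>) / (1-4*\<alpha>)"
  define Q where "Q = sqrt X"
  have "sqrt (((c+s)/(c-s))^2) \<le> sqrt (c^2 * X)"
    using f1 f2 unfolding X_def by (intro real_sqrt_le_mono) simp
  moreover have "sqrt (c^2 * X) = c * Q" unfolding Q_def using real_sqrt_mult[of "c^2" X] c0 by simp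
  moreover have "sqrt (((c+s)/(c-s))^2) = (c+s)/(c-s)" using cs cmp by simp
  ultimately have q: "(c+s)/(c-s) \<le> c * Q" by simp
  have q': "(c+s) \<le> c * Q * (c-s)" using q cmp unfolding Q_def by (simp add: field_simps)
  have e1: "(c^2-s^2) * (c-s) = (c+s) * (c-s)^2" by (simp add: algebra_simps power2_eq_square)
  have cpp: "c + s > 0" using cs by simp
  have "4 * s * m * (1 + 2 * s * c) / ((c^2-s^2) * (c-s)) = (4 * s * m / (c-s)^2) * (c+s)"
    unfolding e1 P2[unfolded P_def] using gen1[of "c+s" "(c-s)^2" "4 * s * m"] cmp cpp by simp
  also have "\<dots> \<le> (4 * s * m / (c-s)^2) * (c * Q * (c-s))"
    using q' cs m by (intro mult_left_mono) auto
  also have "\<dots> = Q * (2 * (m * (c-s)) * (2 * s * c) / (1 - 2 * s * c))"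
    unfolding P1[unfolded P_def] using gen2[of "c-s" s m c Q] cmp by simp
  finally show ?thesis unfolding Q_def X_def .
qed

lemma side:
  fixes c s m K u1 u2 rg g1 g2 a1 a2 b1 b2 :: real
  assumes cs: "c^2+s^2=1" "0 \<le> s" "s < c" and m: "m > 0" and K: "K^2 = 2" "K > 0"
    and u: "u1^2+u2^2 = 1"
    and g: "0 = - (m * (c+s)) + rg * g1" "0 = m * (c-s) + rg * g2" "g1^2+g2^2 = 1" "g1 * u1 + g2 * u2 \<ge> c" "rg \<ge> 0"
    and a: "a1^2+a2^2 = 1" "a1 * u1 + a2 * u2 \<ge> c"
    and b: "b1^2+b2^2 = 1" "b1 * u1 + b2 * u2 \<ge> c"
  shows "a1 * (c+s) + a2 * (s-c) \<ge> K * (c^2-s^2)"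
    "\<bar>a1 * (c-s) + a2 * (c+s)\<bar> \<le> 2 * s * K"
    "\<bar>(a1 - b1) * (c-s) + (a2 - b2) * (c+s)\<bar> \<le> 2 * s * K"
proof -
  have c0: "c \<ge> 0" using cs by linarith
  have rg1: "rg * g1 = m * (c+s)" "rg * g2 = m * (s-c)" using g by (simp_all add: algebra_simps)
  have "rg^2 * (g1^2+g2^2) = (rg * g1)^2 + (rg * g2)^2" by (simp add: algebra_simps power2_eq_square)
  also have "\<dots> = m^2 * (2 * (c^2+s^2))" unfolding rg1 by (simp add: algebra_simps power2_eq_square)
  finally have "rg^2 = (K * m)^2" using g(3) cs K by (simp add: power_mult_distrib)
  hence rgK: "rg = K * m" using g(5) K m by (simp add: power2_eq_iff_nonneg)
  have Kg1: "K * g1 = c + s" using rg1(1) m unfolding rgK by (simp add: mult.assoc)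
  have Kg2: "K * g2 = s - c" using rg1(2) m unfolding rgK by (simp add: mult.assoc)
  have N2: "(c-s)^2 + (c+s)^2 = K^2" using cs K by (simp add: algebra_simps power2_eq_square)
  have d1: "a1 * g1 + a2 * g2 \<ge> 2 * c^2 - 1" by (rule dot_lb[OF a(1) g(3) u a(2) g(4) c0])
  have "K * (a1 * g1 + a2 * g2) = a1 * (K * g1) + a2 * (K * g2)" by (simp add: algebra_simps)
  hence "K * (a1 * g1 + a2 * g2) = a1 * (c+s) + a2 * (s-c)" unfolding Kg1 Kg2 .
  moreover have "K * (2 * c^2 - 1) \<le> K * (a1 * g1 + a2 * g2)" using d1 K by simp
  moreover have "2 * c^2 - 1 = c^2 - s^2" using cs by simp
  ultimately show "a1 * (c+s) + a2 * (s-c) \<ge> K * (c^2-s^2)" by simp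
  have "K * (g1 * (c-s) + g2 * (c+s)) = (K * g1) * (c-s) + (K * g2) * (c+s)" by (simp add: algebra_simps)
  also have "\<dots> = 0" unfolding Kg1 Kg2 by (simp add: algebra_simps)
  finally have "K * (g1 * (c-s) + g2 * (c+s)) = 0" .
  hence g0: "g1 * (c-s) + g2 * (c+s) = 0" using K by simp
  have "\<bar>(a1-g1) * (c-s) + (a2-g2) * (c+s)\<bar> \<le> 2 * s * K"
    by (rule chord[OF a(1) g(3) d1 cs(1,2) N2]) (use K in simp)
  moreover have "(a1-g1) * (c-s) + (a2-g2) * (c+s) = a1 * (c-s) + a2 * (c+s)" using g0 by (simp add: algebra_simps)
  ultimately show "\<bar>a1 * (c-s) + a2 * (c+s)\<bar> \<le> 2 * s * K" by simp
  have d2: "a1 * b1 + a2 * b2 \<ge> 2 * c^2 - 1" by (rule dot_lb[OF a(1) b(1) u a(2) b(2) c0])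
  show "\<bar>(a1 - b1) * (c-s) + (a2 - b2) * (c+s)\<bar> \<le> 2 * s * K"
    by (rule chord[OF a(1) b(1) d2 cs(1,2) N2]) (use K in simp)
qed

lemma norm1: "norm ((u1,u2)::pt) = 1 \<Longrightarrow> u1^2+u2^2 = 1"
  by (simp add: norm_pt)

lemma core_real:
  fixes c s m K u1 u2 w1 w2 rg g1 g2 rh h1 h2 x1 x2 rx p1 p2 rx' q1 q2 y1 y2 ry r1 r2 ry' t1 t2 :: real
  assumes cs: "c^2+s^2=1" "0 \<le> s" "s < c" and m: "m > 0" and K: "K^2 = 2" "K > 0"
    and u: "u1^2+u2^2 = 1" and w: "w1^2+w2^2 = 1"
    and G: "0 = - (m * (c+s)) + rg * g1" "0 = m * (c-s) + rg * g2" "g1^2+g2^2 = 1" "g1 * u1 + g2 * u2 \<ge> c" "rg \<ge> 0"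
    and H: "0 = m * (c+s) + rh * h1" "0 = m * (c-s) + rh * h2" "h1^2+h2^2 = 1" "h1 * w1 + h2 * w2 \<ge> c" "rh \<ge> 0"
    and X: "x1 = - (m * (c+s)) + rx * p1" "x2 = m * (c-s) + rx * p2" "p1^2+p2^2 = 1" "p1 * u1 + p2 * u2 \<ge> c" "rx \<ge> 0"
    and X': "x1 = m * (c+s) + rx' * q1" "x2 = m * (c-s) + rx' * q2" "q1^2+q2^2 = 1" "q1 * w1 + q2 * w2 \<ge> c" "rx' \<ge> 0"
    and Y: "y1 = - (m * (c+s)) + ry * r1" "y2 = m * (c-s) + ry * r2" "r1^2+r2^2 = 1" "r1 * u1 + r2 * u2 \<ge> c" "ry \<ge> 0"
    and Y': "y1 = m * (c+s) + ry' * t1" "y2 = m * (c-s) + ry' * t2" "t1^2+t2^2 = 1" "t1 * w1 + t2 * w2 \<ge> c" "ry' \<ge> 0"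
  shows "(c-s) * sqrt ((x1-y1)^2 + (x2-y2)^2) \<le> 4 * s * m * (1 + 2 * s * c) / (c^2-s^2)"
proof -
  define C where "C = c^2 - s^2"
  have C0: "C > 0" unfolding C_def using cs by (smt (verit) mult_strict_mono power2_eq_square)
  define R where "R = 2 * m * (1 + 2 * s * c) / (K * C)"
  have KC: "K * C > 0" using K C0 by simp
  have wr: "(-w1)^2+w2^2 = 1" using w by simp
  have H': "0 = - (m * (c+s)) + rh * (-h1)" "(-h1)^2+h2^2 = 1" "(-h1) * (-w1) + h2 * w2 \<ge> c"
    using H by simp_all
  note sp = side[OF cs m K u G]
  note sq = side[OF cs m K wr H'(1) H(2) H'(2) H'(3) H(5)]
  have qa: "(-q1)^2+q2^2 = 1" "(-q1) * (-w1) + q2 * w2 \<ge> c" using X' by simp_all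
  have ta: "(-t1)^2+t2^2 = 1" "(-t1) * (-w1) + t2 * w2 \<ge> c" using Y' by simp_all
  have pa: "(-p1)^2+p2^2 = 1" "(-r1)^2+r2^2 = 1" using X Y by simp_all
  note spx = sp[OF X(3,4) Y(3,4)]
  note spy = sp[OF Y(3,4) X(3,4)]
  note sqx = sq[OF qa ta]
  note sqy = sq[OF ta qa]
  have "rx * (K * (c^2-s^2)) \<le> 2 * m * (1 + 2 * s * c)"
    by (rule rbound[OF cs m K X'(3) X(5) X'(5) X(1,2) spx(1) X'(1,2)]) (use sqx(1) in simp)
  hence rxR: "rx \<le> R" unfolding R_def C_def using KC[unfolded C_def] by (simp add: pos_le_divide_eq)
  have "ry * (K * (c^2-s^2)) \<le> 2 * m * (1 + 2 * s * c)"
    by (rule rbound[OF cs m K Y'(3) Y(5) Y'(5) Y(1,2) spy(1) Y'(1,2)]) (use sqy(1) in simp)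
  hence ryR: "ry \<le> R" unfolding R_def C_def using KC[unfolded C_def] by (simp add: pos_le_divide_eq)
  have "rx' * (K * (c^2-s^2)) \<le> 2 * m * (1 + 2 * s * c)"
  proof -
    have e1: "-x1 = -(m * (c+s)) + rx' * (-q1)" using X'(1) by simp
    have e2: "-x1 = m * (c+s) + rx * (-p1)" using X(1) by simp
    have e3: "- ((-p1) * (c+s)) + p2 * (s-c) \<ge> K * (c^2-s^2)" using spx(1) by simp
    show ?thesis by (rule rbound[OF cs m K pa(1) X'(5) X(5) e1 X'(2) sqx(1) e2 X(2) e3])
  qed
  hence rxR': "rx' \<le> R" unfolding R_def C_def using KC[unfolded C_def] by (simp add: pos_le_divide_eq)
  have "ry' * (K * (c^2-s^2)) \<le> 2 * m * (1 + 2 * s * c)"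
  proof -
    have e1: "-y1 = -(m * (c+s)) + ry' * (-t1)" using Y'(1) by simp
    have e2: "-y1 = m * (c+s) + ry * (-r1)" using Y(1) by simp
    have e3: "- ((-r1) * (c+s)) + r2 * (s-c) \<ge> K * (c^2-s^2)" using spy(1) by simp
    show ?thesis by (rule rbound[OF cs m K pa(2) Y'(5) Y(5) e1 Y'(2) sqy(1) e2 Y(2) e3])
  qed
  hence ryR': "ry' \<le> R" unfolding R_def C_def using KC[unfolded C_def] by (simp add: pos_le_divide_eq)
  define M0 where "M0 = R * (2 * s * K)"
  define A where "A = (x1-y1) * (c-s) + (x2-y2) * (c+s)"
  define B where "B = - (x1-y1) * (c-s) + (x2-y2) * (c+s)"
  have "\<bar>rx * (p1 * (c-s) + p2 * (c+s)) - ry * (r1 * (c-s) + r2 * (c+s))\<bar> \<le> M0"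
    unfolding M0_def
  proof (rule lat[OF _ spx(2) spy(2) X(5) rxR Y(5) ryR])
    show "\<bar>p1 * (c-s) + p2 * (c+s) - (r1 * (c-s) + r2 * (c+s))\<bar> \<le> 2 * s * K"
      using spx(3) by (simp add: algebra_simps)
  qed
  moreover have "A = rx * (p1 * (c-s) + p2 * (c+s)) - ry * (r1 * (c-s) + r2 * (c+s))"
    unfolding A_def X(1,2) Y(1,2) by (simp add: algebra_simps)
  ultimately have Ab: "\<bar>A\<bar> \<le> M0" by simp
  have "\<bar>rx' * ((-q1) * (c-s) + q2 * (c+s)) - ry' * ((-t1) * (c-s) + t2 * (c+s))\<bar> \<le> M0"
    unfolding M0_def
  proof (rule lat[OF _ sqx(2) sqy(2) X'(5) rxR' Y'(5) ryR'])
    show "\<bar>(-q1) * (c-s) + q2 * (c+s) - ((-t1) * (c-s) + t2 * (c+s))\<bar> \<le> 2 * s * K"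
      using sqx(3) by (simp add: algebra_simps)
  qed
  moreover have "B = rx' * ((-q1) * (c-s) + q2 * (c+s)) - ry' * ((-t1) * (c-s) + t2 * (c+s))"
    unfolding B_def X'(1,2) Y'(1,2) by (simp add: algebra_simps)
  ultimately have Bb: "\<bar>B\<bar> \<le> M0" by simp
  have M00: "M0 \<ge> 0" using Ab by linarith
  have A2: "A^2 \<le> M0^2" using Ab M00 by (simp add: abs_le_square_iff[symmetric])
  have B2: "B^2 \<le> M0^2" using Bb M00 by (simp add: abs_le_square_iff[symmetric])
  have idAB: "A^2 + B^2 = 2 * (c-s)^2 * (x1-y1)^2 + 2 * (c+s)^2 * (x2-y2)^2"
    unfolding A_def B_def by (simp add: algebra_simps power2_eq_square)
  have "(c-s)^2 \<le> (c+s)^2" using cs by (intro power_mono) auto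
  hence "(c-s)^2 * (x2-y2)^2 \<le> (c+s)^2 * (x2-y2)^2" by (intro mult_right_mono) auto
  hence "(c-s)^2 * ((x1-y1)^2 + (x2-y2)^2) \<le> M0^2"
    using idAB A2 B2 by (simp add: algebra_simps)
  hence "sqrt ((c-s)^2 * ((x1-y1)^2 + (x2-y2)^2)) \<le> sqrt (M0^2)" by (rule real_sqrt_le_mono)
  hence "(c-s) * sqrt ((x1-y1)^2 + (x2-y2)^2) \<le> M0" using cs M00 by (simp add: real_sqrt_mult)
  moreover have "M0 = 4 * s * m * (1 + 2 * s * c) / (c^2-s^2)"
    unfolding M0_def R_def C_def using K KC[unfolded C_def] by (simp add: field_simps)
  ultimately show ?thesis by simp
qed


lemma comp_eq:
  assumes "((x1,x2)::pt) = (a, b) + (r * v1, r * v2)"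
  shows "x1 = a + r * v1" "x2 = b + r * v2"
  using assms by simp_all

lemma key_pt:
  fixes \<alpha> m :: real and u w x y :: pt
  assumes a: "0 \<le> \<alpha>" "\<alpha> < 1/4" and m: "m > 0"
    and un: "norm u = 1" "norm w = 1"
    and gp: "(0,0) \<in> wedge \<alpha> (- (m * (cos \<alpha> + sin \<alpha>)), m * (cos \<alpha> - sin \<alpha>)) u"
    and gq: "(0,0) \<in> wedge \<alpha> (m * (cos \<alpha> + sin \<alpha>), m * (cos \<alpha> - sin \<alpha>)) w"
    and xp: "x \<in> wedge \<alpha> (- (m * (cos \<alpha> + sin \<alpha>)), m * (cos \<alpha> - sin \<alpha>)) u"
    and xq: "x \<in> wedge \<alpha> (m * (cos \<alpha> + sin \<alpha>), m * (cos \<alpha> - sin \<alpha>)) w"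
    and yp: "y \<in> wedge \<alpha> (- (m * (cos \<alpha> + sin \<alpha>)), m * (cos \<alpha> - sin \<alpha>)) u"
    and yq: "y \<in> wedge \<alpha> (m * (cos \<alpha> + sin \<alpha>), m * (cos \<alpha> - sin \<alpha>)) w"
  shows "(cos \<alpha> - sin \<alpha>) * dist x y \<le> 4 * sin \<alpha> * m * (1 + 2 * sin \<alpha> * cos \<alpha>) / (cos \<alpha>^2 - sin \<alpha>^2)"
proof -
  define c s where "c = cos \<alpha>" "s = sin \<alpha>"
  note tf = trig_facts[OF a]
  have cs: "c^2+s^2=1" "0 \<le> s" "s < c" using tf unfolding c_s_def by auto
  have api: "\<alpha> \<le> pi" using a pi_ge_two by linarith
  define K where "K = sqrt 2"
  have K: "K^2 = 2" "K > 0" unfolding K_def by auto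
  obtain u1 u2 where ud: "u = (u1,u2)" by (cases u)
  obtain w1 w2 where wd: "w = (w1,w2)" by (cases w)
  obtain x1 x2 where xd: "x = (x1,x2)" by (cases x)
  obtain y1 y2 where yd: "y = (y1,y2)" by (cases y)
  have u: "u1^2+u2^2 = 1" using un(1) ud norm1 by blast
  have w: "w1^2+w2^2 = 1" using un(2) wd norm1 by blast
  obtain rg g1 g2 where G: "rg \<ge> 0" "g1^2+g2^2 = 1" "g1 * u1 + g2 * u2 \<ge> c"
      "((0::real),(0::real)) = (- (m * (c+s)), m * (c-s)) + (rg * g1, rg * g2)"
    using wedge_comp[OF gp ud u a(1) api] unfolding c_s_def by blast
  obtain rh h1 h2 where H: "rh \<ge> 0" "h1^2+h2^2 = 1" "h1 * w1 + h2 * w2 \<ge> c"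
      "((0::real),(0::real)) = (m * (c+s), m * (c-s)) + (rh * h1, rh * h2)"
    using wedge_comp[OF gq wd w a(1) api] unfolding c_s_def by blast
  obtain rx p1 p2 where X: "rx \<ge> 0" "p1^2+p2^2 = 1" "p1 * u1 + p2 * u2 \<ge> c"
      "(x1,x2) = (- (m * (c+s)), m * (c-s)) + (rx * p1, rx * p2)"
    using wedge_comp[OF xp[unfolded xd] ud u a(1) api] unfolding c_s_def by blast
  obtain rx' q1 q2 where X': "rx' \<ge> 0" "q1^2+q2^2 = 1" "q1 * w1 + q2 * w2 \<ge> c"
      "(x1,x2) = (m * (c+s), m * (c-s)) + (rx' * q1, rx' * q2)"
    using wedge_comp[OF xq[unfolded xd] wd w a(1) api] unfolding c_s_def by blast
  obtain ry r1 r2 where Y: "ry \<ge> 0" "r1^2+r2^2 = 1" "r1 * u1 + r2 * u2 \<ge> c"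
      "(y1,y2) = (- (m * (c+s)), m * (c-s)) + (ry * r1, ry * r2)"
    using wedge_comp[OF yp[unfolded yd] ud u a(1) api] unfolding c_s_def by blast
  obtain ry' t1 t2 where Y': "ry' \<ge> 0" "t1^2+t2^2 = 1" "t1 * w1 + t2 * w2 \<ge> c"
      "(y1,y2) = (m * (c+s), m * (c-s)) + (ry' * t1, ry' * t2)"
    using wedge_comp[OF yq[unfolded yd] wd w a(1) api] unfolding c_s_def by blast
  note G4 = comp_eq[OF G(4)] and H4 = comp_eq[OF H(4)] and X4 = comp_eq[OF X(4)]
    and X'4 = comp_eq[OF X'(4)] and Y4 = comp_eq[OF Y(4)] and Y'4 = comp_eq[OF Y'(4)]
  have "(c-s) * sqrt ((x1-y1)^2 + (x2-y2)^2) \<le> 4 * s * m * (1 + 2 * s * c) / (c^2-s^2)"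
    by (rule core_real[OF cs m K u w G4 G(2,3,1) H4 H(2,3,1) X4 X(2,3,1) X'4 X'(2,3,1)
          Y4 Y(2,3,1) Y'4 Y'(2,3,1)])
  moreover have "dist x y = sqrt ((x1-y1)^2 + (x2-y2)^2)"
    unfolding xd yd by (simp add: dist_prod_def dist_real_def)
  ultimately show ?thesis unfolding c_s_def by simp
qed

theorem lemma2:
  fixes h \<alpha> t :: real
  assumes "h > 0" and "0 \<le> \<alpha>" and "\<alpha> < 1/4"
    and "t = 2 * h / tan (pi/4 - \<alpha>)"
  shows "eps \<alpha> (0, 0) {(- t/2, h), (t/2, h)}
           \<le> ereal (sqrt ((1 + 2*\<alpha>) / (1 - 4*\<alpha>)) * (2 * h * sin (2*\<alpha>) / (1 - sin (2*\<alpha>))))"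
proof -
  define c s where "c = cos \<alpha>" "s = sin \<alpha>"
  note tf = trig_facts[OF assms(2,3)]
  have cs: "c^2+s^2=1" "0 \<le> s" "s < c" "s \<le> \<alpha>" "2 * s * c \<le> 2 * \<alpha>"
    using tf unfolding c_s_def by auto
  have cmp: "c - s > 0" "c + s > 0" using cs by auto
  define m where "m = h / (c-s)"
  have m: "m > 0" unfolding m_def using assms(1) cmp by simp
  have hm: "h = m * (c-s)" unfolding m_def using cmp by simp
  have "t = 2 * h / ((c-s)/(c+s))" using assms(4) tf(7) unfolding c_s_def by simp
  hence tm: "t/2 = m * (c+s)" unfolding m_def using cmp by (simp add: field_simps)
  define P Q where "P = (- (m * (c+s)), m * (c-s))" "Q = (m * (c+s), m * (c-s))"
  have pts: "(- t/2, h) = P" "(t/2, h) = Q" unfolding P_Q_def using tm hm by auto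
  define B where "B = sqrt ((1 + 2*\<alpha>) / (1 - 4*\<alpha>)) * (2 * h * sin (2*\<alpha>) / (1 - sin (2*\<alpha>)))"
  have S: "sin (2*\<alpha>) = 2 * s * c" using tf unfolding c_s_def by simp
  have fin: "4 * s * m * (1 + 2 * s * c) / ((c^2-s^2) * (c-s)) \<le> B"
    unfolding B_def S hm by (rule final_ineq[OF assms(2,3) cs m])
  have B0: "0 \<le> B"
  proof -
    have "0 \<le> 4 * s * m * (1 + 2 * s * c) / ((c^2-s^2) * (c-s))"
    proof -
      have "s^2 < c^2" using cs by (intro power_strict_mono) auto
      thus ?thesis using cs m cmp by (intro divide_nonneg_pos mult_nonneg_nonneg mult_pos_pos) auto
    qed
    thus ?thesis using fin by linarith
  qed
  have key: "dist x y \<le> B" if "norm u = 1" "norm w = 1" "(0,0) \<in> wedge \<alpha> P u" "(0,0) \<in> wedge \<alpha> Q w"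
     "x \<in> wedge \<alpha> P u" "x \<in> wedge \<alpha> Q w" "y \<in> wedge \<alpha> P u" "y \<in> wedge \<alpha> Q w" for u w x y
  proof -
    have "(c-s) * dist x y \<le> 4 * s * m * (1 + 2 * s * c) / (c^2-s^2)"
      using key_pt[OF assms(2,3) m that[unfolded P_Q_def c_s_def]] unfolding c_s_def by simp
    hence "dist x y \<le> 4 * s * m * (1 + 2 * s * c) / (c^2-s^2) / (c-s)"
      using pos_le_divide_eq[OF cmp(1), of "dist x y" "4 * s * m * (1 + 2 * s * c) / (c^2-s^2)"]
      by (metis mult.commute)
    thus ?thesis using fin by (simp add: divide_divide_eq_left)
  qed
  show ?thesis
    unfolding eps_def pts B_def[symmetric]
  proof (rule Sup_least)
    fix z assume "z \<in> {ediam (\<Inter>s\<in>{P, Q}. W s) |W. \<forall>s\<in>{P, Q}. W s \<in> wedges \<alpha> (0, 0) s}"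
    then obtain W where z: "z = ediam (\<Inter>s\<in>{P, Q}. W s)" and W: "\<forall>s\<in>{P, Q}. W s \<in> wedges \<alpha> (0, 0) s"
      by blast
    obtain u where u: "W P = wedge \<alpha> P u" "norm u = 1" "(0,0) \<in> wedge \<alpha> P u"
      using W unfolding wedges_def by blast
    obtain w where w: "W Q = wedge \<alpha> Q w" "norm w = 1" "(0,0) \<in> wedge \<alpha> Q w"
      using W unfolding wedges_def by blast
    have I: "(\<Inter>s\<in>{P, Q}. W s) = wedge \<alpha> P u \<inter> wedge \<alpha> Q w" using u(1) w(1) by auto
    show "z \<le> ereal B"
    proof (cases "(\<Inter>s\<in>{P, Q}. W s) = {}")
      case True
      thus ?thesis using z B0 unfolding ediam_def by simp
    next
      case False
      have "Sup {ereal (dist x y) |x y. x \<in> wedge \<alpha> P u \<inter> wedge \<alpha> Q w \<and> y \<in> wedge \<alpha> P u \<inter> wedge \<alpha> Q w} \<le> ereal B"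
        by (rule Sup_least) (auto intro!: key[OF u(2) w(2) u(3) w(3)])
      thus ?thesis using z False I unfolding ediam_def by simp
    qed
  qed
qed

end
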